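(* Assume $(q+1)/d=3$, let $r$ be an integer, $a,b\in\mathbb F_{q^2}^*$, $0\le j_1,j_2<d$, and put $h(X)=1+aX^{1+3j_1}+bX^{2+3j_2}$ and $L_k(X)=1+a\epsilon^{j_1k}X+b\epsilon^{j_2k}X^2$ for $0\le k<d$. Suppose that for every $0\le k<d$ there exist $\tau_k\in\{0,1,2\}$ and $\lambda_k\in\mu_{q+1}$ with $L_k\in\mathcal L_k(2,\tau_k;\lambda_k)$, and that $\gcd(e_k,3)=1$ where $e_k=r-2+\tau_k$. Define $\pi(k)\in\mathbb Z/d\mathbb Z$ by $\lambda_k^3=\epsilon^{\pi(k)}$, and $K_0=\{k:\tau_k=0\}$, $K_1=\{k:\tau_k=2\}$. If $K_0\neq\emptyset$ and $K_1\ne\emptyset$, then $r\equiv1\pmod3$, $d$ is even, $K_0$ and $K_1$ are the two cosets of $2\mathbb Z/d\mathbb Z$ in $\mathbb Z/d\mathbb Z$, $a^3=-1$, $b=\pm a^2$, $2j_1-j_2\equiv d/2\pmod d$, $j_1+j_2+1\equiv d/2\pmod d$, and $\pi(k)+e_kk=rk$ in $\mathbb Z/d\mathbb Z$ for all $k$. Moreover, either $q\equiv11\pmod{18}$ and $h(X)=1+aX^{(q+1)/3}+bX^{(q+1)/6}$, or $q\equiv5\pmod{18}$ and $h(X)=1+aX^{2(q+1)/3}+bX^{5(q+1)/6}$.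
   Context: $q$ is a prime power, $d$ is a positive divisor of $q+1$, and $\epsilon\in\mathbb F_{q^2}^*$ has multiplicative order $d$. $\mu_{q+1}$ is the subgroup of order $q+1$ of $\mathbb F_{q^2}^*$. For $a\in\mathbb F_{q^2}$, $\bar a=a^q$; for $f(X)=\sum_{i=0}^n a_iX^i\in\mathbb F_{q^2}[X]$ with $a_n\neq0$, $\tilde f(X)=\sum_{i=0}^n\bar a_iX^{n-i}$. For $0\le k<d$, $0\le t<(q+1)/d$ and $\lambda\in\mu_{q+1}$: $\mathcal L_k(t,0;\lambda)$ is the set of $L\in\mathbb F_{q^2}[X]$ with $\deg L=t$, $\tilde L=\lambda L$ and $\gcd(L,X^{(q+1)/d}-\epsilon^k)=1$; for an integer $\tau$ with $(q+1)/d-t\le\tau\le t$, $\mathcal L_k(t,\tau;\lambda)$ is the set of $L=P+X^{(q+1)/d-\tau}Q$ with $P,Q\in\mathbb F_{q^2}[X]$, $\deg P=t-\tau$, $\tilde P=\lambda P$, $\deg Q=\tau+t-(q+1)/d$, $\tilde Q=\lambda\epsilon^kQ$, and $\gcd(L,X^{(q+1)/d}-\epsilon^k)=1$. *)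

theory Defs
  imports "HOL-Computational_Algebra.Computational_Algebra" "HOL-Number_Theory.Cong"
begin

definition has_mult_order :: "'a::field \<Rightarrow> nat \<Rightarrow> bool" where
  "has_mult_order x n \<longleftrightarrow> n > 0 \<and> x ^ n = 1 \<and> (\<forall>m. 0 < m \<and> m < n \<longrightarrow> x ^ m \<noteq> 1)"

definition mu :: "nat \<Rightarrow> 'a::field set" where
  "mu n = {x. x ^ n = 1}"

text \<open>tilde f = sum_i conj(a_i) X^(n-i), with conj a = a^q and n = deg f.\<close>
definition tilde :: "nat \<Rightarrow> 'a::field poly \<Rightarrow> 'a poly" where
  "tilde q f = (\<Sum>i\<le>degree f. monom (coeff f i ^ q) (degree f - i))"

text \<open>The sets L_k(t,tau;lambda); here N = (q+1)/d.  Polynomials of a prescribed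
  degree are nonzero (deg 0 = -infinity convention).\<close>
definition Lset :: "nat \<Rightarrow> nat \<Rightarrow> 'a::field_gcd \<Rightarrow> nat \<Rightarrow> nat \<Rightarrow> nat \<Rightarrow> 'a \<Rightarrow> 'a poly set" where
  "Lset q d eps k t tau lam =
    (let N = (q + 1) div d; G = monom 1 N - [:eps ^ k:] in
     if tau = 0 then
       {L. L \<noteq> 0 \<and> degree L = t \<and> tilde q L = smult lam L \<and> gcd L G = 1}
     else
       {L. N - t \<le> tau \<and> tau \<le> t \<and>
           (\<exists>P Q. L = P + monom 1 (N - tau) * Q \<and>
                  P \<noteq> 0 \<and> degree P = t - tau \<and> tilde q P = smult lam P \<and>
                  Q \<noteq> 0 \<and> degree Q = tau + t - N \<and> tilde q Q = smult (lam * eps ^ k) Q) \<and>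
           gcd L G = 1})"

end

theory Submission
  imports Defs
begin


lemma coeff_tilde:
  "coeff (tilde q f) i = (if i \<le> degree f then coeff f (degree f - i) ^ q else 0)"
proof -
  have "coeff (tilde q f) i = (\<Sum>j\<le>degree f. if j = degree f - i \<and> i \<le> degree f then coeff f j ^ q else 0)"
    unfolding tilde_def coeff_sum coeff_monom by (intro sum.cong) auto
  also have "\<dots> = (if i \<le> degree f then coeff f (degree f - i) ^ q else 0)"
    by (cases "i \<le> degree f") (simp_all add: sum.delta)
  finally show ?thesis .
qed

lemma monom3: "monom (1::'a::comm_ring_1) 3 = [:0,0,0,1:]"
  by (simp add: monom_Suc numeral_3_eq_3 monom_0 one_pCons)

lemma quad_dvd:
  fixes al e :: "'a::field"
  assumes "al ^ 3 * e = 1"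
  shows "[:1, al, al^2:] dvd monom 1 3 - [:e:]"
proof -
  have al: "al \<noteq> 0" using assms by auto
  have eq: "[:1, al, al^2:] * [:1, -al:] = smult (- (al^3)) (monom 1 3 - [:e:])"
    using assms by (simp add: monom3 algebra_simps power2_eq_square power3_eq_cube)
  have "monom 1 3 - [:e:] = smult (- inverse (al^3)) ([:1, al, al^2:] * [:1, -al:])"
    unfolding eq using al by simp
  thus ?thesis by (metis dvd_smult dvd_triv_left)
qed

lemma quad_gcd:
  fixes al e :: "'a::field_gcd"
  assumes "al ^ 3 * e = 1"
  shows "gcd [:1, al, al^2:] (monom 1 3 - [:e:]) \<noteq> 1"
proof
  assume g: "gcd [:1, al, al^2:] (monom 1 3 - [:e:]) = 1"
  have "[:1, al, al^2:] dvd gcd [:1, al, al^2:] (monom 1 3 - [:e:])"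
    using quad_dvd[OF assms] by (intro gcd_greatest) auto
  hence "is_unit [:1, al, al^2:]" using g by simp
  moreover have "al \<noteq> 0" using assms by auto
  ultimately show False by (simp add: is_unit_iff_degree)
qed



lemma ord_dvd:
  fixes e :: "'a::field"
  assumes "has_mult_order e d" "e ^ m = 1" shows "d dvd m"
proof -
  have d: "d > 0" "e ^ d = 1" and min: "\<And>m. 0 < m \<Longrightarrow> m < d \<Longrightarrow> e ^ m \<noteq> 1"
    using assms(1) unfolding has_mult_order_def by auto
  have "e ^ m = e ^ (d * (m div d) + m mod d)" by simp
  also have "\<dots> = (e ^ d) ^ (m div d) * e ^ (m mod d)"
    by (simp only: power_add power_mult)
  finally have "e ^ m = (e ^ d) ^ (m div d) * e ^ (m mod d)" .
  hence "e ^ (m mod d) = 1" using d assms(2) by simp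
  hence "m mod d = 0" using min[of "m mod d"] d by (meson mod_less_divisor neq0_conv)
  thus ?thesis by auto
qed

lemma ord_mod:
  fixes e :: "'a::field"
  assumes "has_mult_order e d" shows "e ^ m = e ^ (m mod d)"
proof -
  have d: "e ^ d = 1" using assms unfolding has_mult_order_def by auto
  have "e ^ m = e ^ (d * (m div d) + m mod d)" by simp
  also have "\<dots> = (e ^ d) ^ (m div d) * e ^ (m mod d)"
    by (simp only: power_add power_mult)
  finally have "e ^ m = (e ^ d) ^ (m div d) * e ^ (m mod d)" .
  thus ?thesis using d by simp
qed

lemma ord_cong:
  fixes e :: "'a::field"
  assumes "has_mult_order e d" "e ^ m = e ^ n" shows "[int m = int n] (mod int d)"
proof -
  have e0: "e \<noteq> 0" using assms(1) unfolding has_mult_order_def by (auto simp: zero_power)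
  have *: "[int m = int n] (mod int d)" if "e ^ m = e ^ n" "n \<le> m" for m n
  proof -
    have "e ^ n * e ^ (m - n) = e ^ n * 1" using that by (simp flip: power_add)
    hence "e ^ (m - n) = 1" using e0 by simp
    hence "d dvd m - n" by (rule ord_dvd[OF assms(1)])
    thus ?thesis using that(2)
      by (metis cong_iff_dvd_diff cong_sym of_nat_diff int_dvd_int_iff)
  qed
  show ?thesis
  proof (cases "n \<le> m")
    case True show ?thesis by (rule *[OF assms(2) True])
  next
    case False
    hence "[int n = int m] (mod int d)" by (intro *[of n m] assms(2)[symmetric]) simp
    thus ?thesis by (rule cong_sym)
  qed
qed

lemma alternation:
  fixes A B :: "nat \<Rightarrow> bool" and d :: nat
  assumes cover: "\<And>k. A k \<or> B k" and disj: "\<And>k. \<not> (A k \<and> B k)"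
    and noAA: "\<And>k. A k \<Longrightarrow> A (Suc k) \<Longrightarrow> False"
    and noBB: "\<And>k. B k \<Longrightarrow> B (Suc k) \<Longrightarrow> False"
    and per: "\<And>k. A (k + d) = A k" and d: "d > 0"
  shows "even d \<and> (\<forall>k. A k = (A 0 = even k))"
proof -
  have alt: "A (Suc k) = (\<not> A k)" for k
  proof
    assume "A (Suc k)" thus "\<not> A k" using noAA by blast
  next
    assume "\<not> A k" hence "B k" using cover by blast
    hence "\<not> B (Suc k)" using noBB by blast
    thus "A (Suc k)" using cover by blast
  qed
  have all: "A k = (A 0 = even k)" for k
    proof (induction k)
    case (Suc k) thus ?case using alt[of k] by simp
  qed simp
  have "A d = A 0" using per[of 0] by simp
  hence "even d" using all[of d] by (cases "A 0") auto
  thus ?thesis using all by blast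
qed



lemma tau0_facts:
  fixes al be lam eps :: "'a::field_gcd"
  assumes L: "[:1, al, be:] \<in> Lset q d eps k 2 0 lam" and be: "be \<noteq> 0" and N: "(q+1) div d = 3"
  shows "be ^ q = lam \<and> al ^ q = lam * al \<and> lam * be = 1 \<and>
         gcd [:1, al, be:] (monom 1 3 - [:eps ^ k:]) = 1"
proof -
  have deg: "degree [:1, al, be:] = 2" using be by simp
  from L have t: "tilde q [:1, al, be:] = smult lam [:1, al, be:]"
    and g: "gcd [:1, al, be:] (monom 1 3 - [:eps ^ k:]) = 1"
    unfolding Lset_def Let_def N by auto
  have c0: "coeff (tilde q [:1, al, be:]) 0 = be ^ q" using be by (simp add: coeff_tilde deg)
  have c1: "coeff (tilde q [:1, al, be:]) 1 = al ^ q" using be by (simp add: coeff_tilde deg)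
  have c2: "coeff (tilde q [:1, al, be:]) 2 = 1" using be by (simp add: coeff_tilde deg)
  have "be ^ q = lam" using c0 t by simp
  moreover have "al ^ q = lam * al" using c1 t by simp
  moreover have "lam * be = 1" using c2 t by (simp add: numeral_2_eq_2)
  ultimately show ?thesis using g by simp
qed

lemma tau2_facts:
  fixes al be lam eps :: "'a::field_gcd"
  assumes L: "[:1, al, be:] \<in> Lset q d eps k 2 2 lam" and be: "be \<noteq> 0" and N: "(q+1) div d = 3"
  shows "lam = 1 \<and> be ^ q = eps ^ k * al \<and>
         gcd [:1, al, be:] (monom 1 3 - [:eps ^ k:]) = 1"
proof -
  from L obtain P Q where LPQ: "[:1, al, be:] = P + monom 1 1 * Q"
    and P: "degree P = 0" "tilde q P = smult lam P"
    and Q: "degree Q = 1" "tilde q Q = smult (lam * eps ^ k) Q"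
    and g: "gcd [:1, al, be:] (monom 1 3 - [:eps ^ k:]) = 1"
    unfolding Lset_def Let_def N by auto
  have cL: "coeff [:1, al, be:] i = coeff P i + (if i < 1 then 0 else coeff Q (i - 1))" for i
    by (subst LPQ) (simp add: coeff_monom_mult)
  have "coeff P 1 = 0" "coeff P 2 = 0" using P(1) by (simp_all add: coeff_eq_0)
  hence p0: "coeff P 0 = 1" and q0: "coeff Q 0 = al" and q1: "coeff Q 1 = be"
    using cL[of 0] cL[of 1] cL[of 2] by (simp_all add: numeral_2_eq_2)
  have "coeff (tilde q P) 0 = 1" using p0 P(1) by (simp add: coeff_tilde)
  hence lam: "lam = 1" using P(2) p0 by simp
  have "coeff (tilde q Q) 0 = be ^ q" using q1 Q(1) by (simp add: coeff_tilde)
  hence "be ^ q = eps ^ k * al" using Q(2) q0 lam by simp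
  thus ?thesis using lam g by simp
qed



lemma powswap: "((x::'a::monoid_mult) ^ m) ^ n = (x ^ n) ^ m"
  by (simp only: power_mult[symmetric] mult.commute)

lemma powmul: "(x::'a::monoid_mult) ^ (n * k) = (x ^ k) ^ n"
  by (simp only: power_mult[symmetric] mult.commute)

theorem lemma4p8:
  fixes q d :: nat and eps a b :: "'a::{field_gcd,finite}" and r :: int
    and j1 j2 :: nat and tau :: "nat \<Rightarrow> nat" and lam :: "nat \<Rightarrow> 'a"
  assumes q_pp: "\<exists>p m. prime p \<and> m > 0 \<and> q = p ^ m"
    and card: "card (UNIV :: 'a set) = q ^ 2"
    and d_pos: "d > 0" and d_dvd: "d dvd q + 1" and N3: "(q + 1) div d = 3"
    and eps: "has_mult_order eps d"
    and ab: "a \<noteq> 0" "b \<noteq> 0"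
    and j: "j1 < d" "j2 < d"
    and hyp: "\<forall>k<d. tau k \<in> {0, 1, 2} \<and> lam k \<in> mu (q + 1) \<and>
               [:1, a * eps ^ (j1 * k), b * eps ^ (j2 * k):] \<in> Lset q d eps k 2 (tau k) (lam k) \<and>
               gcd (r - 2 + int (tau k)) 3 = 1"
    and K0: "{k. k < d \<and> tau k = 0} \<noteq> {}"
    and K1: "{k. k < d \<and> tau k = 2} \<noteq> {}"
  shows "[r = 1] (mod 3) \<and> even d \<and>
    (({k. k < d \<and> tau k = 0} = {k. k < d \<and> even k} \<and> {k. k < d \<and> tau k = 2} = {k. k < d \<and> odd k}) \<or>
     ({k. k < d \<and> tau k = 0} = {k. k < d \<and> odd k} \<and> {k. k < d \<and> tau k = 2} = {k. k < d \<and> even k})) \<and>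
    a ^ 3 = -1 \<and> (b = a ^ 2 \<or> b = - (a ^ 2)) \<and>
    [2 * int j1 - int j2 = int d div 2] (mod int d) \<and>
    [int j1 + int j2 + 1 = int d div 2] (mod int d) \<and>
    (\<forall>k<d. \<forall>p::nat. lam k ^ 3 = eps ^ p \<longrightarrow>
        [int p + (r - 2 + int (tau k)) * int k = r * int k] (mod int d)) \<and>
    ((q mod 18 = 11 \<and>
        1 + monom a (1 + 3 * j1) + monom b (2 + 3 * j2) =
        1 + monom a ((q + 1) div 3) + monom b ((q + 1) div 6)) \<or>
     (q mod 18 = 5 \<and>
        1 + monom a (1 + 3 * j1) + monom b (2 + 3 * j2) =
        1 + monom a (2 * (q + 1) div 3) + monom b (5 * (q + 1) div 6)))"
proof -
  have d2: "eps ^ d = 1" and e0: "eps \<noteq> 0"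
    and emin: "\<And>m. 0 < m \<Longrightarrow> m < d \<Longrightarrow> eps ^ m \<noteq> 1"
    using eps unfolding has_mult_order_def by (auto simp: zero_power)
  have qd: "q + 1 = 3 * d" using d_dvd N3 by (metis dvd_mult_div_cancel mult.commute)
  have eq1: "eps ^ (q+1) = 1" unfolding qd powmul d2 by simp
  have pswap: "\<And>n k. (eps ^ n) ^ k = (eps ^ k) ^ n" by (rule powswap)
  define w where "w = eps ^ (2*j1)"
  define z where "z = eps ^ j2"
  define y where "y = eps ^ (j1+j2+1)"
  define g where "g = eps ^ (3*j1+1)"
  define A where "A k = (a^2 * w^k = b * z^k)" for k
  define B where "B k = (a*b*y^k = 1)" for k
  define al where "al k = a * eps ^ (j1 * k)" for k
  define be where "be k = b * eps ^ (j2 * k)" for k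
  have w0: "w \<noteq> 0" "z \<noteq> 0" "y \<noteq> 0" "g \<noteq> 0" using e0 by (auto simp: w_def z_def y_def g_def)
  have E: "\<And>n k. eps ^ (n * k) = (eps ^ k) ^ n" by (rule powmul)
  have id1: "al k ^ 2 = a^2 * w^k" for k
  proof -
    have "(eps^(j1*k))^2 = eps^(j1*k*2)" by (simp only: power_mult)
    also have "j1*k*2 = 2*j1*k" by simp
    also have "eps^(2*j1*k) = w^k" by (simp only: w_def power_mult)
    finally show ?thesis by (simp add: al_def power_mult_distrib)
  qed
  have id2: "be k = b * z^k" for k
    unfolding be_def z_def by (simp add: E pswap)
  have id3: "al k * be k * eps^k = a*b*y^k" for k
  proof -
    have "y^k = eps^((j1+j2+1)*k)" by (simp only: y_def power_mult)
    also have "(j1+j2+1)*k = j1*k + j2*k + k" by (simp add: algebra_simps)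
    also have "eps^(j1*k + j2*k + k) = eps^(j1*k) * eps^(j2*k) * eps^k" by (simp only: power_add)
    finally show ?thesis by (simp add: al_def be_def mult_ac)
  qed
  have id4: "al k ^ 3 * eps^k = a^3 * g^k" for k
  proof -
    have "(eps^(j1*k))^3 * eps^k = eps^(j1*k*3 + k)" by (simp only: power_mult power_add)
    also have "j1*k*3 + k = (3*j1+1)*k" by (simp add: algebra_simps)
    also have "eps^((3*j1+1)*k) = g^k" by (simp only: g_def power_mult)
    finally show ?thesis by (simp add: al_def power_mult_distrib mult_ac)
  qed
  have be0: "be k \<noteq> 0" for k using e0 ab by (simp add: be_def)
  have al0: "al k \<noteq> 0" for k using e0 ab by (simp add: al_def)
  have hk: "tau k \<in> {0, 1, 2} \<and> lam k \<in> mu (q + 1) \<and>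
               [:1, al k, be k:] \<in> Lset q d eps k 2 (tau k) (lam k) \<and>
               gcd (r - 2 + int (tau k)) 3 = 1" if "k < d" for k
    using hyp that unfolding al_def be_def by blast
  have hkL: "[:1, al k, be k:] \<in> Lset q d eps k 2 (tau k) (lam k)" if "k < d" for k
    using hk[OF that] by blast
  obtain k0 where k0: "k0 < d" "tau k0 = 0" using K0 by auto
  obtain k1 where k1: "k1 < d" "tau k1 = 2" using K1 by auto
  have g3: "\<not> 3 dvd x" if "gcd x 3 = (1::int)" for x
    using that gcd_proj2_if_dvd_int by fastforce
  have "\<not> 3 dvd (r - 2)" using hk[OF k0(1)] k0(2) g3 by simp
  moreover have "\<not> 3 dvd r" using hk[OF k1(1)] k1(2) g3 by simp
  ultimately have rmod: "r mod 3 = 1" by presburger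
  have tau02: "tau k = 0 \<or> tau k = 2" if "k < d" for k
  proof -
    have "tau k \<noteq> 1"
    proof
      assume "tau k = 1"
      hence "gcd (r - 1) 3 = 1" using hk[OF that] by simp
      moreover have "3 dvd r - 1" using rmod by presburger
      ultimately show False using g3[of "r - 1"] by simp
    qed
    moreover have "tau k \<in> {0, 1, 2}" using hk[OF that] by blast
    ultimately show ?thesis by auto
  qed
  have mu_pow: "(c * u ^ m) ^ (q+1) = c ^ (q+1)" if "u ^ (q+1) = 1" for c u :: 'a and m
  proof -
    have "(c * u ^ m) ^ (q+1) = c ^ (q+1) * (u ^ (q+1)) ^ m"
      by (simp only: power_mult_distrib powswap[of u m "q+1"])
    thus ?thesis using that by simp
  qed
  have T0: "be k ^ q = lam k \<and> al k ^ q = lam k * al k \<and> lam k * be k = 1 \<and>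
         gcd [:1, al k, be k:] (monom 1 3 - [:eps ^ k:]) = 1" if "k < d" "tau k = 0" for k
    by (rule tau0_facts[OF hkL[OF that(1), unfolded that(2)] be0 N3])
  have T2: "lam k = 1 \<and> be k ^ q = eps ^ k * al k \<and>
         gcd [:1, al k, be k:] (monom 1 3 - [:eps ^ k:]) = 1" if "k < d" "tau k = 2" for k
    by (rule tau2_facts[OF hkL[OF that(1), unfolded that(2)] be0 N3])
  have sucq: "x ^ (q+1) = x ^ q * x" for x :: 'a by (simp add: mult.commute)
  have bmu: "b ^ (q+1) = 1"
  proof -
    have "b ^ (q+1) = be k0 ^ (q+1)" unfolding be_def by (rule mu_pow[OF eq1, symmetric])
    also have "\<dots> = be k0 ^ q * be k0" by (rule sucq)
    also have "\<dots> = 1" using T0[OF k0] by simp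
    finally show ?thesis .
  qed
  have bemu: "be k ^ (q+1) = 1" for k unfolding be_def by (subst mu_pow[OF eq1]) (rule bmu)
  have bemu': "be k ^ q * be k = 1" for k using bemu[of k] unfolding sucq .
  have amu: "a ^ (q+1) = 1"
  proof -
    have "eps ^ k1 * al k1 * be k1 = be k1 ^ q * be k1" using T2[OF k1] by simp
    also have "\<dots> = 1" by (rule bemu')
    finally have h: "(eps ^ k1 * al k1 * be k1) ^ (q+1) = 1" by simp
    have "(eps ^ k1 * al k1 * be k1) ^ (q+1) = (eps ^ (q+1)) ^ k1 * al k1 ^ (q+1) * be k1 ^ (q+1)"
      by (simp only: power_mult_distrib powswap[of eps k1 "q+1"])
    hence "al k1 ^ (q+1) = 1" unfolding h eq1 bemu by simp
    hence "(a * eps ^ (j1 * k1)) ^ (q+1) = 1" unfolding al_def .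
    thus ?thesis unfolding mu_pow[OF eq1] .
  qed
  have almu: "al k ^ q * al k = 1" for k
  proof -
    have "al k ^ (q+1) = 1" unfolding al_def by (subst mu_pow[OF eq1]) (rule amu)
    thus ?thesis unfolding sucq .
  qed
  have G_contra: "False" if "al k ^ 3 * eps ^ k = 1" "be k = al k ^ 2"
     "gcd [:1, al k, be k:] (monom 1 3 - [:eps ^ k:]) = 1" for k
    using quad_gcd[OF that(1)] that(2,3) by simp
  have P0: "A k \<and> a^3 * g^k \<noteq> 1" if "k < d" "tau k = 0" for k
  proof -
    from T0[OF that] have f: "al k ^ q = lam k * al k" "lam k * be k = 1"
      "gcd [:1, al k, be k:] (monom 1 3 - [:eps ^ k:]) = 1" by auto
    have "lam k * al k ^ 2 = al k ^ q * al k" using f(1) by (simp add: power2_eq_square)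
    also have "\<dots> = lam k * be k" using almu f(2) by simp
    finally have eq: "lam k * al k ^ 2 = lam k * be k" .
    have "lam k \<noteq> 0" using f(2) by auto
    hence sq: "be k = al k ^ 2" using eq by simp
    hence "A k" using id1[of k] id2[of k] unfolding A_def by simp
    moreover have "a^3 * g^k \<noteq> 1"
    proof
      assume "a^3 * g^k = 1"
      hence "al k ^ 3 * eps ^ k = 1" using id4[of k] by simp
      thus False by (rule G_contra[OF _ sq f(3)])
    qed
    ultimately show ?thesis by blast
  qed
  have P2: "B k \<and> a^3 * g^k \<noteq> 1" if "k < d" "tau k = 2" for k
  proof -
    from T2[OF that] have f: "be k ^ q = eps ^ k * al k"
      "gcd [:1, al k, be k:] (monom 1 3 - [:eps ^ k:]) = 1" by auto
    have abe: "al k * be k * eps ^ k = 1" using f(1) bemu'[of k] by (simp add: mult_ac)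
    hence "B k" using id3[of k] unfolding B_def by simp
    moreover have "a^3 * g^k \<noteq> 1"
    proof
      assume "a^3 * g^k = 1"
      hence h: "al k ^ 3 * eps ^ k = 1" using id4[of k] by simp
      have "(al k * eps ^ k) * be k = (al k * eps ^ k) * al k ^ 2"
        using abe h by (simp add: power3_eq_cube power2_eq_square mult_ac)
      hence "be k = al k ^ 2" using al0 e0 by simp
      thus False using G_contra[OF h _ f(2)] by simp
    qed
    ultimately show ?thesis by blast
  qed
  have pmod: "x ^ k = x ^ (k mod d)" if "x ^ d = 1" for x :: 'a and k
  proof -
    have "x ^ k = x ^ (d * (k div d) + k mod d)" by simp
    also have "\<dots> = (x ^ d) ^ (k div d) * x ^ (k mod d)" by (simp only: power_add power_mult)
    finally show ?thesis using that by simp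
  qed
  have dpow: "(eps ^ n) ^ d = 1" for n using d2 pswap by simp
  have wd: "w ^ d = 1" "z ^ d = 1" "y ^ d = 1" "g ^ d = 1"
    unfolding w_def z_def y_def g_def by (rule dpow)+
  have Amod: "A k = A (k mod d)" for k
    unfolding A_def using pmod[OF wd(1), of k] pmod[OF wd(2), of k] by simp
  have Bmod: "B k = B (k mod d)" for k
    unfolding B_def using pmod[OF wd(3), of k] by simp
  have Gall: "a^3 * g^k \<noteq> 1" for k
  proof -
    have "k mod d < d" using d_pos by simp
    hence "a^3 * g^(k mod d) \<noteq> 1" using tau02 P0 P2 by blast
    thus ?thesis using pmod[OF wd(4), of k] by simp
  qed
  have cover: "A k \<or> B k" for k
  proof -
    have "k mod d < d" using d_pos by simp
    hence "A (k mod d) \<or> B (k mod d)" using tau02 P0 P2 by blast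
    thus ?thesis using Amod[of k] Bmod[of k] by simp
  qed
  have wy: "w * y = g * z" unfolding w_def y_def g_def z_def by (simp flip: power_add)
  have disj: "\<not> (A k \<and> B k)" for k
  proof
    assume h: "A k \<and> B k"
    have "a^3 * g^k * z^k = a^3 * (w*y)^k" by (simp add: wy power_mult_distrib)
    also have "\<dots> = (a^2 * w^k) * (a * y^k)" by (simp add: power_mult_distrib power2_eq_square power3_eq_cube)
    also have "\<dots> = (a*b*y^k) * z^k" using h unfolding A_def by simp
    also have "\<dots> = z^k" using h unfolding B_def by simp
    finally have "a^3 * g^k = 1" using w0 by simp
    thus False using Gall by blast
  qed
  have ABk0: "A k0" "B k1" using P0[OF k0] P2[OF k1] by auto
  have noAA: "False" if "A k" "A (Suc k)" for k
  proof -
    have ne: "a^2 * w^k \<noteq> 0" using ab w0 by simp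
    have "(a^2 * w^k) * w = (a^2 * w^k) * z" using that unfolding A_def by (simp add: mult_ac)
    hence wz: "w = z" using ne w0(1) by auto
    hence "a^2 = b" using that(1) w0 unfolding A_def by simp
    hence "A k1" unfolding A_def using wz by simp
    thus False using ABk0 disj by blast
  qed
  have noBB: "False" if "B k" "B (Suc k)" for k
  proof -
    have "(a*b*y^k) * y = (a*b*y^k) * 1" using that unfolding B_def by (simp add: mult_ac)
    hence "y = 1" using that(1) unfolding B_def by simp
    hence "B k0" using that(1) unfolding B_def by simp
    thus False using ABk0 disj by blast
  qed
  have per: "A (k + d) = A k" for k using Amod[of "k+d"] Amod[of k] by simp
  have altr: "even d \<and> (\<forall>k. A k = (A 0 = even k))"
    by (rule alternation[of A B, OF cover disj noAA noBB per d_pos])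
  have evd: "even d" using altr by (rule conjunct1)
  have Aev: "A k = (A 0 = even k)" for k using altr by blast
  have d2le: "2 \<le> d" using evd d_pos by presburger
  have hd: "eps ^ (d div 2) = -1"
  proof -
    have "(eps ^ (d div 2)) ^ 2 = eps ^ (d div 2 * 2)" by (simp only: power_mult)
    also have "d div 2 * 2 = d" using evd by simp
    finally have "(eps ^ (d div 2)) ^ 2 = 1" using d2 by simp
    moreover have "eps ^ (d div 2) \<noteq> 1" using emin[of "d div 2"] d2le by simp
    ultimately show ?thesis using power2_eq_1_iff by blast
  qed
  have Atau: "A k = (tau k = 0)" if "k < d" for k
    using tau02[OF that] P0[OF that] P2[OF that] disj[of k] by auto
  have exj: "\<exists>j. A j \<and> \<not> A (Suc j) \<and> A (Suc (Suc j))"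
  proof (cases "A 0")
    case True thus ?thesis using Aev[of "Suc 0"] Aev[of "Suc (Suc 0)"] by (intro exI[of _ 0]) simp
  next
    case False thus ?thesis using Aev[of "Suc 0"] Aev[of "Suc (Suc 0)"] Aev[of "Suc (Suc (Suc 0))"] by (intro exI[of _ 1]) simp
  qed
  then obtain j where j: "A j" "\<not> A (Suc j)" "A (Suc (Suc j))" by blast
  have wz: "w = - z"
  proof -
    have ne: "a^2 * w^j \<noteq> 0" using ab w0 by simp
    have e1: "a^2 * w^j * w^2 = b * z^j * z^2" using j(3) unfolding A_def by (simp add: power2_eq_square mult_ac)
    have e2: "b * z^j * z^2 = a^2 * w^j * z^2" using j(1) unfolding A_def by simp
    have "w^2 = z^2" using e1 e2 ne w0 by auto
    moreover have "w \<noteq> z"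
    proof
      assume "w = z"
      hence "A (Suc j)" using j(1) unfolding A_def by (simp add: mult_ac)
      thus False using j(2) by blast
    qed
    ultimately show ?thesis using power2_eq_iff by blast
  qed
  have exj': "\<exists>j. B j \<and> \<not> B (Suc j) \<and> B (Suc (Suc j))"
  proof (cases "A 0")
    case True thus ?thesis using Aev[of "Suc 0"] Aev[of "Suc (Suc 0)"] Aev[of "Suc (Suc (Suc 0))"] cover[of "Suc 0"] cover[of "Suc (Suc (Suc 0))"] disj[of "Suc (Suc 0)"]
      by (intro exI[of _ 1]) simp
  next
    case False thus ?thesis using Aev[of "Suc 0"] Aev[of "Suc (Suc 0)"] cover[of 0] cover[of "Suc (Suc 0)"] disj[of "Suc 0"]
      by (intro exI[of _ 0]) simp
  qed
  then obtain j' where j': "B j'" "\<not> B (Suc j')" "B (Suc (Suc j'))" by blast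
  have ym: "y = -1"
  proof -
    have "a*b*y^j' * y^2 = 1" using j'(3) unfolding B_def by (simp add: power2_eq_square mult_ac)
    hence "y^2 = 1" using j'(1) unfolding B_def by simp
    moreover have "y \<noteq> 1"
    proof
      assume "y = 1"
      hence "B (Suc j')" using j'(1) unfolding B_def by simp
      thus False using j'(2) by blast
    qed
    ultimately show ?thesis using power2_eq_1_iff by blast
  qed
  have "eps ^ (2*j1) = eps ^ (d div 2 + j2)"
    using wz hd unfolding w_def z_def by (simp add: power_add)
  hence c1: "[int (2*j1) = int (d div 2 + j2)] (mod int d)" by (rule ord_cong[OF eps])
  have cong1: "[2 * int j1 - int j2 = int d div 2] (mod int d)"
    using c1 by (simp add: cong_iff_dvd_diff zdiv_int algebra_simps)
  have "eps ^ (j1+j2+1) = eps ^ (d div 2)" using ym hd unfolding y_def by simp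
  hence c2: "[int (j1+j2+1) = int (d div 2)] (mod int d)" by (rule ord_cong[OF eps])
  have cong2: "[int j1 + int j2 + 1 = int d div 2] (mod int d)"
    using c2 by (simp add: zdiv_int add.commute add.left_commute)
  have a3b: "a ^ 3 = -1 \<and> (b = a ^ 2 \<or> b = - (a ^ 2))"
  proof (cases "A 0")
    case True
    hence b2: "b = a^2" unfolding A_def by simp
    have "B 1" using Aev[of 1] True cover[of 1] by simp
    hence "a * b = -1" unfolding B_def ym by (simp add: minus_equation_iff)
    hence "a^3 = -1" using b2 by (simp add: power3_eq_cube power2_eq_square mult_ac)
    thus ?thesis using b2 by simp
  next
    case False
    hence "B 0" using cover[of 0] by simp
    hence ab1: "a * b = 1" unfolding B_def by simp
    have "A 1" using Aev[of 1] False by simp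
    hence "a^2 * w = b * z" unfolding A_def by simp
    hence "a^2 * w = (- b) * w" using wz by simp
    hence "a^2 = - b" using w0(1) mult_right_cancel by blast
    hence b2: "b = - (a^2)" by simp
    hence "a^3 = -1" using ab1 by (simp add: power3_eq_cube power2_eq_square mult_ac minus_equation_iff)
    thus ?thesis using b2 by simp
  qed
  have g1: "g = 1"
  proof -
    have "g * z = 1 * z" using wy wz ym by simp
    thus ?thesis using w0 by simp
  qed
  have dvd3: "d dvd 3*j1+1" using g1 unfolding g_def by (rule ord_dvd[OF eps])
  have PI: "\<forall>k<d. \<forall>p::nat. lam k ^ 3 = eps ^ p \<longrightarrow>
        [int p + (r - 2 + int (tau k)) * int k = r * int k] (mod int d)"
  proof (intro allI impI)
    fix k p assume k: "k < d" and lp: "lam k ^ 3 = eps ^ p"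
    show "[int p + (r - 2 + int (tau k)) * int k = r * int k] (mod int d)"
    proof (cases "tau k = 0")
      case False
      hence t2: "tau k = 2" using tau02[OF k] by simp
      hence "eps ^ p = 1" using lp T2[OF k t2] by simp
      hence "d dvd p" by (rule ord_dvd[OF eps])
      thus ?thesis using t2 by (simp add: cong_iff_dvd_diff)
    next
      case True
      have lb: "lam k * be k = 1" using T0[OF k True] by simp
      have "A k" using Atau[OF k] True by simp
      hence sq: "be k = al k ^ 2" using id1[of k] id2[of k] unfolding A_def by simp
      have h2: "al k ^ 3 * eps ^ k = -1" using id4[of k] a3b g1 by simp
      have "lam k ^ 3 * (al k ^ 3 * eps ^ k) ^ 2 = (lam k * al k ^ 2) ^ 3 * (eps ^ k) ^ 2" by algebra
      hence "lam k ^ 3 = (eps ^ k) ^ 2" using lb sq h2 by simp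
      also have "\<dots> = eps ^ (2 * k)" by (simp only: powmul)
      finally have "eps ^ p = eps ^ (2 * k)" using lp by simp
      hence "[int p = int (2 * k)] (mod int d)" by (rule ord_cong[OF eps])
      thus ?thesis using True by (simp add: cong_iff_dvd_diff algebra_simps)
    qed
  qed
  have Ksets: "({k. k < d \<and> tau k = 0} = {k. k < d \<and> even k} \<and> {k. k < d \<and> tau k = 2} = {k. k < d \<and> odd k}) \<or>
     ({k. k < d \<and> tau k = 0} = {k. k < d \<and> odd k} \<and> {k. k < d \<and> tau k = 2} = {k. k < d \<and> even k})"
  proof -
    have t0: "k < d \<Longrightarrow> (tau k = 0) = (A 0 = even k)" for k using Atau[of k] Aev[of k] by simp
    have t2: "k < d \<Longrightarrow> (tau k = 2) = (\<not> (A 0 = even k))" for k using t0[of k] tau02[of k] by auto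
    show ?thesis
    proof (cases "A 0")
      case True
      hence t0': "k < d \<Longrightarrow> (tau k = 0) = even k" and t2': "k < d \<Longrightarrow> (tau k = 2) = odd k" for k
        using t0[of k] t2[of k] by auto
      show ?thesis unfolding set_eq_iff mem_Collect_eq using t0' t2' by blast
    next
      case False
      hence t0': "k < d \<Longrightarrow> (tau k = 0) = odd k" and t2': "k < d \<Longrightarrow> (tau k = 2) = even k" for k
        using t0[of k] t2[of k] by auto
      show ?thesis unfolding set_eq_iff mem_Collect_eq using t0' t2' by blast
    qed
  qed
  obtain m where m: "3*j1+1 = d*m" using dvd3 by blast
  have "m < 3"
  proof (rule ccontr)
    assume "\<not> m < 3"
    hence "d * 3 \<le> d * m" by simp
    thus False using m \<open>j1 < d\<close> by linarith
  qed
  moreover have "m \<noteq> 0" proof assume "m = 0" thus False using m by simp qed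
  ultimately have m12: "3*j1+1 = d \<or> 3*j1+1 = 2*d" using m by (cases m) (auto simp: numeral_2_eq_2 less_Suc_eq)
  define h where "h = d div 2"
  have dh: "d = 2 * h" using evd unfolding h_def by simp
  have j1pos: "j1 \<ge> 1" using m12 dh by presburger
  have idh: "int d div 2 = int h" unfolding h_def by (simp add: zdiv_int)
  define X where "X = 2 * int j1 - int j2 - int h"
  have "int d dvd X" using cong1 unfolding X_def idh by (simp add: cong_iff_dvd_diff)
  moreover have "- int d < X \<and> X < int d"
  proof (cases "3*j1+1 = d")
    case True
    hence "3 * int j1 + 1 = 2 * int h" using dh by linarith
    thus ?thesis unfolding X_def using dh \<open>j2 < d\<close> j1pos by linarith
  next
    case False
    hence "3 * int j1 + 1 = 4 * int h" using dh m12 by linarith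
    thus ?thesis unfolding X_def using dh \<open>j2 < d\<close> j1pos by linarith
  qed
  ultimately have X0: "X = 0" using dvd_imp_le_int[of X "int d"] by (cases "X = 0") auto
  hence j2e: "2 * j1 = j2 + h" unfolding X_def by linarith
  have q6: "q + 1 = 6 * h" using qd dh by simp
  have arith: "(q mod 18 = 11 \<and> 1 + 3 * j1 = (q + 1) div 3 \<and> 2 + 3 * j2 = (q + 1) div 6) \<or>
     (q mod 18 = 5 \<and> 1 + 3 * j1 = 2 * (q + 1) div 3 \<and> 2 + 3 * j2 = 5 * (q + 1) div 6)"
  proof (cases "3*j1+1 = d")
    case True
    hence e: "3*j1+1 = 2*h" using dh by simp
    hence "odd j1" by presburger
    then obtain t where t: "j1 = 2*t+1" by (metis oddE)
    have ht: "h = 3*t+2" using e t by simp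
    have j2t: "j2 = t" using j2e t ht by simp
    have qt: "q = 18*t+11" using q6 ht by simp
    have "q mod 18 = 11" unfolding qt by simp
    moreover have "1 + 3 * j1 = (q + 1) div 3" unfolding qt t by simp
    moreover have "2 + 3 * j2 = (q + 1) div 6" unfolding qt j2t by simp
    ultimately show ?thesis by blast
  next
    case False
    hence e: "3*j1+1 = 4*h" using dh m12 by simp
    hence "j1 mod 4 = 1" by presburger
    then obtain t where t: "j1 = 4*t+1" by (metis div_mult_mod_eq mult.commute)
    have ht: "h = 3*t+1" using e t by simp
    have j2t: "j2 = 5*t+1" using j2e t ht by simp
    have qt: "q = 18*t+5" using q6 ht by simp
    have "q mod 18 = 5" unfolding qt by simp
    moreover have "1 + 3 * j1 = 2 * (q + 1) div 3" unfolding qt t by simp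
    moreover have "2 + 3 * j2 = 5 * (q + 1) div 6" unfolding qt j2t by simp
    ultimately show ?thesis by blast
  qed
  have r1: "[r = 1] (mod 3)" unfolding cong_def using rmod by simp
  have polys: "(q mod 18 = 11 \<and>
        1 + monom a (1 + 3 * j1) + monom b (2 + 3 * j2) =
        1 + monom a ((q + 1) div 3) + monom b ((q + 1) div 6)) \<or>
     (q mod 18 = 5 \<and>
        1 + monom a (1 + 3 * j1) + monom b (2 + 3 * j2) =
        1 + monom a (2 * (q + 1) div 3) + monom b (5 * (q + 1) div 6))"
  proof (rule disjE[OF arith])
    assume h: "q mod 18 = 11 \<and> 1 + 3 * j1 = (q + 1) div 3 \<and> 2 + 3 * j2 = (q + 1) div 6"
    have h1: "q mod 18 = 11" and h2: "1 + 3 * j1 = (q + 1) div 3" and h3: "2 + 3 * j2 = (q + 1) div 6" using h by blast+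
    show ?thesis apply (rule disjI1) unfolding h2 h3 using h1 by blast
  next
    assume h: "q mod 18 = 5 \<and> 1 + 3 * j1 = 2 * (q + 1) div 3 \<and> 2 + 3 * j2 = 5 * (q + 1) div 6"
    have h1: "q mod 18 = 5" and h2: "1 + 3 * j1 = 2 * (q + 1) div 3" and h3: "2 + 3 * j2 = 5 * (q + 1) div 6" using h by blast+
    show ?thesis apply (rule disjI2) unfolding h2 h3 using h1 by blast
  qed
  show ?thesis
    by (intro conjI r1 evd Ksets cong1 cong2 PI polys conjunct1[OF a3b] conjunct2[OF a3b])
qed


end
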